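(* Let $d\ge2$. Let $\mathcal P$ be the set of equivalence classes of $\partial\mathbb Z^{d-1}_{\ge1}$ under the relation $x\sim y$ iff the conditional law of $W_1-W_0$ given $W_0=x$ equals that given $W_0=y$, for the gap process of the SBBS with capacity $c=\infty$ and some error probability $\varepsilon_0\in(0,1)$. Then: (0) $\mathcal P=\{p_1,\dots,p_k\}$ is finite and does not depend on the choice of $\varepsilon_0\in(0,1)$; moreover for every $\varepsilon\in(0,1)$ and every capacity $c\in\{1,2,\dots\}\cup\{\infty\}$ the transition kernel of the gap process is homogeneous on each cell $p_j$, i.e. the conditional law of $W_1-W_0$ given $W_0=x$ is the same for all $x\in p_j$; (i) for each $j$ there exist $x^j\in\partial\mathbb Z^{d-1}_{\ge1}$ and a nonempty $I^j\subseteq\{1,\dots,d-1\}$ with $x^j_i=1$ for $i<\min I^j$, $x^j_{\min I^j}=0$, and $p_j=\{y\in\partial\mathbb Z^{d-1}_{\ge1}: y_i=x^j_i\ (i\in I^j),\ y_i\ge x^j_i\ (i\notin I^j)\}$; (ii) after re-indexing, for each $j\in\{1,\dots,d-1\}$, $p_j=\{y\in\partial\mathbb Z^{d-1}_{\ge1}: y_j=0,\ y_{j+1}\ge2,\ y_i\ge1\text{ for }i\notin\{j,j+1\}\}$ (the condition on $y_{j+1}$ being void when $j=d-1$); (iii) if $c\ge d$, then for any $\varepsilon\in(0,1)$ the transition kernels at points of distinct cells are distinct.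
   Context: Stochastic box-ball system (SBBS). Fix an error probability $\varepsilon\in[0,1]$ and a capacity $c\in\{1,2,\dots\}\cup\{\infty\}$. A configuration is $\zeta\in\{0,1\}^{\mathbb N}$, $\mathbb N=\{1,2,\dots\}$, with finitely many $1$'s (balls). Given $\zeta$, the stochastic carrier process $\Gamma$ is defined by $\Gamma(0)=0$ and recursively (with fresh independent randomness at each $k$): $\Gamma(k)=\Gamma(k-1)+1$ with probability $1-\varepsilon$ (and $\Gamma(k)=\Gamma(k-1)$ otherwise) if $\zeta(k)=1$ and $\Gamma(k-1)<c$; $\Gamma(k)=\Gamma(k-1)-1$ if $\zeta(k)=0$ and $\Gamma(k-1)\ge1$; $\Gamma(k)=\Gamma(k-1)$ otherwise. The new configuration is $\zeta'(k)=\mathbf 1(\Gamma(k)-\Gamma(k-1)=-1)+\mathbf 1(\Gamma(k)=\Gamma(k-1),\ \zeta(k)=1)$. Iterating independently gives the SBBS trajectory. With $d$ balls at positions $\zeta^{(1)}_t<\dots<\zeta^{(d)}_t$, the gap process is $W_t=(W^1_t,\dots,W^{d-1}_t)$, $W^i_t=\zeta^{(i+1)}_t-\zeta^{(i)}_t-1$, a time-homogeneous Markov chain on $\mathbb Z^{d-1}_{\ge0}$ (its transition law is translation invariant in the ball configuration, so depends only on the current gap vector). $\partial\mathbb Z^{d-1}_{\ge1}:=\mathbb Z^{d-1}_{\ge0}\setminus\mathbb Z^{d-1}_{\ge1}$ (gap vectors with at least one zero coordinate). *)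

theory Defs
  imports "HOL-Probability.Probability_Mass_Function" "HOL-Library.Extended_Nat"
begin

text \<open>One step of the stochastic box-ball system, run on a finite 0/1 word
  (True = ball).  Argument g is the current carrier load Gamma(k-1),
  c the capacity (enat, infinity allowed), eps the error probability.\<close>
fun sbbs_run :: "real \<Rightarrow> enat \<Rightarrow> nat \<Rightarrow> bool list \<Rightarrow> bool list pmf" where
  "sbbs_run eps c g [] = return_pmf []"
| "sbbs_run eps c g (True # xs) =
     (if enat g < c then
        bind_pmf (bernoulli_pmf (1 - eps)) (\<lambda>b.
          if b then map_pmf (Cons False) (sbbs_run eps c (Suc g) xs)
          else map_pmf (Cons True) (sbbs_run eps c g xs))
      else map_pmf (Cons True) (sbbs_run eps c g xs))"
| "sbbs_run eps c g (False # xs) =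
     (if 1 \<le> g then map_pmf (Cons True) (sbbs_run eps c (g - 1) xs)
      else map_pmf (Cons False) (sbbs_run eps c g xs))"

text \<open>Configuration with gap vector x (length d-1): first ball at the first site,
  then consecutive balls separated by x!0, x!1, ... empty sites; followed by
  d = length x + 1 empty sites, which suffice for the carrier (load at most d)
  to unload, so every later site of the new configuration is empty.\<close>
definition config_of_gaps :: "nat list \<Rightarrow> bool list" where
  "config_of_gaps x = True # concat (map (\<lambda>g. replicate g False @ [True]) x)
                      @ replicate (length x + 1) False"

definition ball_positions :: "bool list \<Rightarrow> nat list" where
  "ball_positions w = filter (\<lambda>i. w ! i) [0..<length w]"

definition gaps_of :: "bool list \<Rightarrow> nat list" where
  "gaps_of w = (let ps = ball_positions w in map2 (\<lambda>a b. b - a - 1) ps (tl ps))"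

text \<open>Law of the increment W_1 - W_0 given W_0 = x, for error probability eps
  and capacity c (translation invariance: any configuration with gap vector x
  gives the same law).\<close>
definition gap_kernel :: "real \<Rightarrow> enat \<Rightarrow> nat list \<Rightarrow> int list pmf" where
  "gap_kernel eps c x =
     map_pmf (\<lambda>w. map2 (\<lambda>a b. int a - int b) (gaps_of w) x)
             (sbbs_run eps c 0 (config_of_gaps x))"

text \<open>Coordinates are 1-based as in the paper: y_i = y ! (i - 1), i in {1..d-1}.\<close>
definition coord :: "nat list \<Rightarrow> nat \<Rightarrow> nat" where
  "coord y i = y ! (i - 1)"

definition bdry :: "nat \<Rightarrow> nat list set" where
  "bdry d = {y. length y = d - 1 \<and> (\<exists>i\<in>{1..d-1}. coord y i = 0)}"

definition kernel_equiv :: "nat \<Rightarrow> real \<Rightarrow> (nat list \<times> nat list) set" where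
  "kernel_equiv d eps0 = {(x, y). x \<in> bdry d \<and> y \<in> bdry d \<and>
                                 gap_kernel eps0 \<infinity> x = gap_kernel eps0 \<infinity> y}"

definition cells :: "nat \<Rightarrow> real \<Rightarrow> nat list set set" where
  "cells d eps0 = bdry d // kernel_equiv d eps0"

end

theory Submission
  imports Defs
begin

fun run2 :: "real \<Rightarrow> enat \<Rightarrow> nat \<Rightarrow> bool list \<Rightarrow> (bool list \<times> nat) pmf" where
  "run2 eps c g [] = return_pmf ([], g)"
| "run2 eps c g (True # xs) =
     (if enat g < c then
        bind_pmf (bernoulli_pmf (1 - eps)) (\<lambda>b.
          if b then map_pmf (apfst (Cons False)) (run2 eps c (Suc g) xs)
          else map_pmf (apfst (Cons True)) (run2 eps c g xs))
      else map_pmf (apfst (Cons True)) (run2 eps c g xs))"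
| "run2 eps c g (False # xs) =
     (if 1 \<le> g then map_pmf (apfst (Cons True)) (run2 eps c (g - 1) xs)
      else map_pmf (apfst (Cons False)) (run2 eps c g xs))"

lemma run_fst: "sbbs_run eps c g w = map_pmf fst (run2 eps c g w)"
  by (induction eps c g w rule: run2.induct)
     (auto simp: map_bind_pmf pmf.map_comp o_def intro!: bind_pmf_cong)

lemma run2_split:
  "run2 eps c g (u @ w) = bind_pmf (run2 eps c g u) (\<lambda>(ov,h). map_pmf (apfst ((@) ov)) (run2 eps c h w))"
proof (induction eps c g u rule: run2.induct)
  case (1 eps c g)
  then show ?case by (simp add: bind_return_pmf apfst_def map_prod_def pmf.map_ident)
next
  case (2 eps c g xs)
  then show ?case
    by (auto simp: map_bind_pmf bind_map_pmf bind_assoc_pmf pmf.map_comp o_def split_beta apfst_def map_prod_def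
        intro!: bind_pmf_cong)
next
  case (3 eps c g xs)
  then show ?case
    by (auto simp: map_bind_pmf bind_map_pmf bind_assoc_pmf pmf.map_comp o_def split_beta apfst_def map_prod_def
        intro!: bind_pmf_cong)
qed


definition cnt :: "bool list \<Rightarrow> nat" where "cnt w = length (filter id w)"

fun ml :: "nat \<Rightarrow> bool list \<Rightarrow> nat" where
  "ml g [] = g"
| "ml g (True # xs) = ml (Suc g) xs"
| "ml g (False # xs) = ml (g - 1) xs"

lemma ml_mono: "g \<le> g' \<Longrightarrow> ml g w \<le> ml g' w"
  by (induction g w arbitrary: g' rule: ml.induct) auto

lemma ml_append: "ml g (u @ w) = ml (ml g u) w"
  by (induction g u rule: ml.induct) auto

lemma ml_rep: "ml g (replicate a False) = g - a"
  by (induction a arbitrary: g) (auto simp: diff_diff_left)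

lemma run2_inv:
  "(ov,h) \<in> set_pmf (run2 eps c g w) \<Longrightarrow> h \<le> ml g w \<and> cnt ov + h = cnt w + g \<and> length ov = length w"
proof (induction eps c g w arbitrary: ov h rule: run2.induct)
  case (1 eps c g)
  then show ?case by (simp add: cnt_def)
next
  case (2 eps c g xs)
  have m: "ml g xs \<le> ml (Suc g) xs" by (rule ml_mono) simp
  from 2 show ?case
    by (auto simp: cnt_def split: if_splits) (use m in force)+
next
  case (3 eps c g xs)
  from 3 show ?case
    by (cases "g = 0") (auto simp: cnt_def split: if_splits)
qed

lemma run2_app:
  assumes "(o1,h1) \<in> set_pmf (run2 eps c g u)" "(o2,h2) \<in> set_pmf (run2 eps c h1 w)"
  shows "(o1 @ o2, h2) \<in> set_pmf (run2 eps c g (u @ w))"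
  using assms by (auto simp: run2_split set_bind_pmf intro!: bexI[of _ "(o1,h1)"] image_eqI[of _ _ "(o2,h2)"])

lemma run2_fill: "a \<le> g \<Longrightarrow> (replicate a True, g - a) \<in> set_pmf (run2 eps c g (replicate a False))"
proof (induction a arbitrary: g)
  case 0
  then show ?case by simp
next
  case (Suc a)
  have "(replicate a True, (g - 1) - a) \<in> set_pmf (run2 eps c (g - 1) (replicate a False))"
    using Suc.IH[of "g - 1"] Suc.prems by simp
  moreover have "(g - 1) - a = g - Suc a" by simp
  ultimately show ?case using Suc.prems by (auto simp: image_iff intro!: bexI[of _ "(replicate a True, g - Suc a)"])
qed

lemma run2_pick: "0 < eps \<Longrightarrow> eps < 1 \<Longrightarrow> enat g < c \<Longrightarrow> ([False], Suc g) \<in> set_pmf (run2 eps c g [True])"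
  by (auto simp: set_bind_pmf set_pmf_bernoulli)

lemma run2_keep: "0 < eps \<Longrightarrow> eps < 1 \<Longrightarrow> ([True], g) \<in> set_pmf (run2 eps c g [True])"
  by (auto simp: set_bind_pmf set_pmf_bernoulli)

fun mfinal :: "nat \<Rightarrow> nat list \<Rightarrow> nat" where
  "mfinal m [] = m"
| "mfinal m (y # ys) = mfinal (Suc m - y) ys"

fun tr :: "nat \<Rightarrow> nat list \<Rightarrow> nat list" where
  "tr m [] = []"
| "tr m (y # ys) = min y (Suc m) # tr (Suc m - y) ys"

lemma length_tr[simp]: "length (tr m xs) = length xs"
  by (induction m xs rule: tr.induct) auto

lemma tr_append: "tr m (xs @ ys) = tr m xs @ tr (mfinal m xs) ys"
  by (induction m xs rule: tr.induct) auto

lemma mfinal_append: "mfinal m (xs @ ys) = mfinal (mfinal m xs) ys"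
  by (induction m xs rule: mfinal.induct) auto

lemma sub_min: "Suc m - min y (Suc m) = Suc m - (y::nat)"
  by (simp add: min_def)

lemma tr_idem: "tr m (tr m xs) = tr m xs"
  by (induction m xs rule: tr.induct) (auto simp: sub_min)

lemma mfinal_tr: "mfinal m (tr m xs) = mfinal m xs"
  by (induction m xs rule: tr.induct) (auto simp: sub_min)

lemma take_tr: "take i (tr m xs) = tr m (take i xs)"
  by (induction m xs arbitrary: i rule: tr.induct) (auto simp: take_Cons split: nat.splits)

lemma nth_tr: "i < length xs \<Longrightarrow> tr m xs ! i = min (xs ! i) (Suc (mfinal m (take i xs)))"
  by (induction m xs arbitrary: i rule: tr.induct) (auto simp: nth_Cons split: nat.splits)

lemma tr_le: "tr m xs = xs \<Longrightarrow> i < length xs \<Longrightarrow> xs ! i \<le> Suc (mfinal m (take i xs))"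
  by (metis min.cobounded2 nth_tr)

lemma tr_neq: "tr m xs \<noteq> xs \<Longrightarrow> \<exists>i<length xs. Suc (mfinal m (take i xs)) < xs ! i"
proof (rule ccontr)
  assume a: "tr m xs \<noteq> xs" "\<not> (\<exists>i<length xs. Suc (mfinal m (take i xs)) < xs ! i)"
  have "tr m xs = xs"
    by (rule nth_equalityI) (use a(2) in \<open>auto simp: nth_tr min_def\<close>)
  with a(1) show False by simp
qed

lemma mfinal_le: "mfinal m xs \<le> m + length xs"
proof (induction m xs rule: mfinal.induct)
  case (2 m y ys)
  have "Suc m - y + length ys \<le> m + Suc (length ys)" by arith
  then show ?case using 2 by simp
qed simp

lemma tr_bound: "set (tr m xs) \<subseteq> {0..m + length xs}"
proof (induction m xs rule: tr.induct)
  case (2 m y ys)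
  have "Suc m - y + length ys \<le> m + Suc (length ys)" by arith
  then show ?case using 2 by (auto simp: min_def)
qed simp

lemma tr_char:
  assumes "tr m t = t" "length y = length t"
  shows "tr m y = t \<longleftrightarrow> (\<forall>i<length t. (t!i < Suc (mfinal m (take i t)) \<longrightarrow> y!i = t!i)
                                  \<and> (Suc (mfinal m (take i t)) \<le> t!i \<longrightarrow> t!i \<le> y!i))"
  using assms
proof (induction t arbitrary: m y)
  case Nil
  then show ?case by simp
next
  case (Cons t0 ts)
  obtain y0 ys where y: "y = y0 # ys" using Cons.prems(2) by (cases y) auto
  have t0: "t0 \<le> Suc m" and ts: "tr (Suc m - t0) ts = ts"
    using Cons.prems(1) by (auto simp: min_def split: if_splits)
  have lys: "length ys = length ts" using Cons.prems(2) y by simp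
  have head: "min y0 (Suc m) = t0 \<and> Suc m - y0 = Suc m - t0 \<longleftrightarrow>
      ((t0 < Suc m \<longrightarrow> y0 = t0) \<and> (Suc m \<le> t0 \<longrightarrow> t0 \<le> y0))"
    using t0 by (auto simp: min_def)
  have headr: "min y0 (Suc m) = t0 \<longleftrightarrow> ((t0 < Suc m \<longrightarrow> y0 = t0) \<and> (Suc m \<le> t0 \<longrightarrow> t0 \<le> y0))"
    using t0 by (auto simp: min_def)
  have "tr m y = t0 # ts \<longleftrightarrow> min y0 (Suc m) = t0 \<and> tr (Suc m - t0) ys = ts"
    using head headr y by auto
  also have "\<dots> \<longleftrightarrow> ((t0 < Suc m \<longrightarrow> y0 = t0) \<and> (Suc m \<le> t0 \<longrightarrow> t0 \<le> y0)) \<and>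
      (\<forall>i<length ts. (ts!i < Suc (mfinal (Suc m - t0) (take i ts)) \<longrightarrow> ys!i = ts!i)
                    \<and> (Suc (mfinal (Suc m - t0) (take i ts)) \<le> ts!i \<longrightarrow> ts!i \<le> ys!i))"
    using Cons.IH[OF ts lys] headr by simp
  also have "\<dots> \<longleftrightarrow> (\<forall>i<length (t0 # ts). ((t0 # ts)!i < Suc (mfinal m (take i (t0 # ts))) \<longrightarrow> y!i = (t0 # ts)!i)
                                  \<and> (Suc (mfinal m (take i (t0 # ts))) \<le> (t0 # ts)!i \<longrightarrow> (t0 # ts)!i \<le> y!i))"
    unfolding y by (simp only: length_Cons All_less_Suc2) simp
  finally show ?case .
qed

lemma bp_append: "ball_positions (a @ b) = ball_positions a @ map (\<lambda>p. p + length a) (ball_positions b)"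
proof -
  have "[0..<length a + length b] = [0..<length a] @ map (\<lambda>p. p + length a) [0..<length b]"
  proof -
    have "map (\<lambda>p. p + length a) [0..<length b] = [length a..<length b + length a]" by (rule map_add_upt)
    then show ?thesis using upt_add_eq_append[of 0 "length a" "length b"] by (simp add: add.commute)
  qed
  then show ?thesis
    unfolding ball_positions_def
    by (auto simp: filter_map o_def nth_append intro!: filter_cong)
qed

lemma bp_Nil[simp]: "ball_positions [] = []"
  by (simp add: ball_positions_def)

lemma bp_single: "ball_positions [b] = (if b then [0] else [])"
  by (simp add: ball_positions_def)

lemma bp_len: "length (ball_positions w) = cnt w"
proof (induction w rule: rev_induct)
  case Nil then show ?case by (simp add: cnt_def)
next
  case (snoc x xs) then show ?case by (simp add: bp_append bp_single cnt_def)
qed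

lemma bp_rep: "ball_positions (replicate n True) = [0..<n]"
  by (induction n) (simp_all add: replicate_append_same[symmetric] bp_append bp_single del: replicate_append_same)

lemma bp_lt: "p \<in> set (ball_positions a) \<Longrightarrow> p < length a"
  by (simp add: ball_positions_def)

lemma gaps_len: "length (gaps_of w) = cnt w - 1"
  by (simp add: gaps_of_def Let_def bp_len)

lemma gaps_nth: "j < cnt w - 1 \<Longrightarrow> gaps_of w ! j = ball_positions w ! Suc j - ball_positions w ! j - 1"
  by (simp add: gaps_of_def Let_def bp_len nth_tl)

lemma cnt_append[simp]: "cnt (a @ b) = cnt a + cnt b"
  by (simp add: cnt_def)
lemma cnt_Cons[simp]: "cnt (x # b) = (if x then Suc (cnt b) else cnt b)"
  by (simp add: cnt_def)
lemma cnt_Nil[simp]: "cnt [] = 0"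
  by (simp add: cnt_def)
lemma cnt_rep: "cnt (replicate n x) = (if x then n else 0)"
  by (induction n) auto

definition fk :: "nat list \<Rightarrow> bool list \<Rightarrow> int list" where
  "fk x w = map2 (\<lambda>a b. int a - int b) (gaps_of w) x"

lemma gap_kernel_fk: "gap_kernel eps c x = map_pmf (fk x) (sbbs_run eps c 0 (config_of_gaps x))"
  by (simp add: gap_kernel_def fk_def[abs_def])

lemma fk_insert:
  assumes "cnt a = Suc n" "n < length x"
  shows "fk (x[n := Suc (x ! n)]) (a @ False # b) = fk x (a @ b)"
proof -
  let ?A = "ball_positions a" and ?B = "ball_positions b"
  have p1: "ball_positions (a @ False # b) = ?A @ map (\<lambda>p. p + Suc (length a)) ?B"
    using bp_append[of a "False # b"] bp_append[of "[False]" b] by (simp add: bp_single o_def)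
  have p2: "ball_positions (a @ b) = ?A @ map (\<lambda>p. p + length a) ?B"
    by (rule bp_append)
  have lA: "length ?A = Suc n" using assms(1) bp_len by simp
  have cw: "cnt (a @ False # b) = cnt (a @ b)" by simp
  have Alt: "?A ! n < length a" using lA bp_lt nth_mem by (metis lessI)
  show ?thesis
  proof (rule nth_equalityI)
    show "length (fk (x[n := Suc (x ! n)]) (a @ False # b)) = length (fk x (a @ b))"
      by (simp add: fk_def gaps_len)
  next
    fix j assume j: "j < length (fk (x[n := Suc (x ! n)]) (a @ False # b))"
    then have jg: "j < cnt (a @ b) - 1" and jx: "j < length x" by (auto simp: fk_def gaps_len)
    have L: "fk (x[n := Suc (x ! n)]) (a @ False # b) ! j = int (gaps_of (a @ False # b) ! j) - int (x[n := Suc (x ! n)] ! j)"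
      using j by (simp add: fk_def)
    have R: "fk x (a @ b) ! j = int (gaps_of (a @ b) ! j) - int (x ! j)"
      using j by (simp add: fk_def gaps_len)
    have g1: "gaps_of (a @ False # b) ! j = ball_positions (a @ False # b) ! Suc j - ball_positions (a @ False # b) ! j - 1"
      using jg cw gaps_nth by metis
    have g2: "gaps_of (a @ b) ! j = ball_positions (a @ b) ! Suc j - ball_positions (a @ b) ! j - 1"
      using jg gaps_nth by metis
    have lB: "Suc j < Suc n + length ?B" using jg lA bp_len[of b] assms(1) by simp
    have Bne: "length ?B > 0" if "n < j \<or> j = n" using that lB lA by auto
    consider "j < n" | "j = n" | "n < j" by linarith
    then show "fk (x[n := Suc (x ! n)]) (a @ False # b) ! j = fk x (a @ b) ! j"
    proof cases
      case 1
      have e1: "ball_positions (a @ False # b) ! j = ?A ! j" "ball_positions (a @ False # b) ! Suc j = ?A ! Suc j"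
        using 1 lA unfolding p1 by (simp_all add: nth_append)
      have e2: "ball_positions (a @ b) ! j = ?A ! j" "ball_positions (a @ b) ! Suc j = ?A ! Suc j"
        using 1 lA unfolding p2 by (simp_all add: nth_append)
      have "x[n := Suc (x ! n)] ! j = x ! j" using 1 by simp
      then show ?thesis using L R g1 g2 e1 e2 by simp
    next
      case 2
      have e1: "ball_positions (a @ False # b) ! j = ?A ! n" "ball_positions (a @ False # b) ! Suc j = ?B ! 0 + Suc (length a)"
        using 2 lA Bne unfolding p1 by (simp_all add: nth_append)
      have e2: "ball_positions (a @ b) ! j = ?A ! n" "ball_positions (a @ b) ! Suc j = ?B ! 0 + length a"
        using 2 lA Bne unfolding p2 by (simp_all add: nth_append)
      have "x[n := Suc (x ! n)] ! j = Suc (x ! n)" using 2 jx by simp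
      then show ?thesis using L R g1 g2 e1 e2 Alt 2 by simp
    next
      case 3
      have e1: "ball_positions (a @ False # b) ! j = ?B ! (j - Suc n) + Suc (length a)"
               "ball_positions (a @ False # b) ! Suc j = ?B ! (Suc j - Suc n) + Suc (length a)"
        using 3 lA lB unfolding p1 by (simp_all add: nth_append)
      have e2: "ball_positions (a @ b) ! j = ?B ! (j - Suc n) + length a"
               "ball_positions (a @ b) ! Suc j = ?B ! (Suc j - Suc n) + length a"
        using 3 lA lB unfolding p2 by (simp_all add: nth_append)
      have "x[n := Suc (x ! n)] ! j = x ! j" using 3 by simp
      then show ?thesis using L R g1 g2 e1 e2 by simp
    qed
  qed
qed

definition seg :: "nat \<Rightarrow> bool list" where "seg a = replicate a False @ [True]"

lemma config_seg: "config_of_gaps x = True # concat (map seg x) @ replicate (length x + 1) False"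
  by (simp add: config_of_gaps_def seg_def[abs_def])

lemma cnt_segs: "cnt (concat (map seg xs)) = length xs"
  by (induction xs) (simp_all add: seg_def cnt_rep)

lemma ml_segs: "ml (Suc m) (concat (map seg xs)) = Suc (mfinal m xs)"
  by (induction xs arbitrary: m) (simp_all add: seg_def ml_append ml_rep)

lemma config_split:
  assumes "i < length x"
  shows "config_of_gaps x = (True # concat (map seg (take i x)) @ replicate (x!i) False)
            @ (True # concat (map seg (drop (Suc i) x)) @ replicate (length x + 1) False)"
    and "config_of_gaps (x[i := Suc (x!i)]) = (True # concat (map seg (take i x)) @ replicate (x!i) False)
            @ False # (True # concat (map seg (drop (Suc i) x)) @ replicate (length x + 1) False)"
proof -
  have x: "x = take i x @ x!i # drop (Suc i) x" using assms by (simp add: id_take_nth_drop)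
  have x': "x[i := Suc (x!i)] = take i x @ Suc (x!i) # drop (Suc i) x" using assms by (simp add: upd_conv_take_nth_drop)
  show "config_of_gaps x = (True # concat (map seg (take i x)) @ replicate (x!i) False)
            @ (True # concat (map seg (drop (Suc i) x)) @ replicate (length x + 1) False)"
    apply (subst config_seg)
    apply (subst (1) x)
    by (simp add: seg_def)
  show "config_of_gaps (x[i := Suc (x!i)]) = (True # concat (map seg (take i x)) @ replicate (x!i) False)
            @ False # (True # concat (map seg (drop (Suc i) x)) @ replicate (length x + 1) False)"
    apply (subst config_seg)
    apply (subst (1) x')
    by (simp add: seg_def replicate_append_same)
qed

lemma kernel_insert:
  assumes i: "i < length x" and big: "Suc (mfinal 0 (take i x)) \<le> x!i"
  shows "gap_kernel eps c (x[i := Suc (x!i)]) = gap_kernel eps c x"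
proof -
  define u where "u = True # concat (map seg (take i x)) @ replicate (x!i) False"
  define v where "v = True # concat (map seg (drop (Suc i) x)) @ replicate (length x + 1) False"
  let ?x' = "x[i := Suc (x!i)]"
  have c1: "config_of_gaps x = u @ v" and c2: "config_of_gaps ?x' = u @ False # v"
    using config_split[OF i] unfolding u_def v_def by simp_all
  have mlu: "ml 0 u = 0"
    using big by (simp add: u_def ml_append ml_segs ml_rep)
  have cu: "cnt u = Suc i" using i by (simp add: u_def cnt_rep cnt_segs)
  have supp: "h = 0 \<and> cnt ov = Suc i" if "(ov,h) \<in> set_pmf (run2 eps c 0 u)" for ov h
    using run2_inv[OF that] mlu cu by simp
  have "gap_kernel eps c ?x' = bind_pmf (run2 eps c 0 u)
      (\<lambda>p. map_pmf (fk ?x' \<circ> fst \<circ> apfst ((@) (fst p))) (run2 eps c (snd p) (False # v)))"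
    unfolding gap_kernel_fk run_fst c2 run2_split
    by (simp add: map_bind_pmf pmf.map_comp split_beta o_def del: run2.simps)
  also have "\<dots> = bind_pmf (run2 eps c 0 u)
      (\<lambda>p. map_pmf (fk x \<circ> fst \<circ> apfst ((@) (fst p))) (run2 eps c (snd p) v))"
  proof (rule bind_pmf_cong[OF refl])
    fix p assume p: "p \<in> set_pmf (run2 eps c 0 u)"
    obtain ov h where ph: "p = (ov,h)" by (cases p)
    with p supp have h0: "h = 0" and co: "cnt ov = Suc i" by auto
    have "map_pmf (fk ?x' \<circ> fst \<circ> apfst ((@) ov)) (run2 eps c 0 (False # v))
        = map_pmf (fk ?x' \<circ> fst \<circ> apfst ((@) ov) \<circ> apfst (Cons False)) (run2 eps c 0 v)"
      by (simp add: pmf.map_comp)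
    also have "\<dots> = map_pmf (fk x \<circ> fst \<circ> apfst ((@) ov)) (run2 eps c 0 v)"
      by (rule map_pmf_cong[OF refl]) (simp add: fk_insert[OF co i] split_beta)
    finally show "map_pmf (fk ?x' \<circ> fst \<circ> apfst ((@) (fst p))) (run2 eps c (snd p) (False # v))
        = map_pmf (fk x \<circ> fst \<circ> apfst ((@) (fst p))) (run2 eps c (snd p) v)"
      using ph h0 by simp
  qed
  also have "\<dots> = gap_kernel eps c x"
    unfolding gap_kernel_fk run_fst c1 run2_split
    by (simp add: map_bind_pmf pmf.map_comp split_beta o_def del: run2.simps)
  finally show ?thesis .
qed

lemma kernel_tr: "gap_kernel eps c x = gap_kernel eps c (tr 0 x)"
proof (induction "sum_list x" arbitrary: x rule: less_induct)
  case less
  show ?case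
  proof (cases "tr 0 x = x")
    case True then show ?thesis by simp
  next
    case False
    then obtain i where i: "i < length x" and gt: "Suc (mfinal 0 (take i x)) < x!i"
      using tr_neq by blast
    define x0 where "x0 = x[i := x!i - 1]"
    have li: "i < length x0" using i by (simp add: x0_def)
    have tk: "take i x0 = take i x" by (simp add: x0_def)
    have x0i: "x0 ! i = x!i - 1" using i by (simp add: x0_def)
    have xx: "x0[i := Suc (x0!i)] = x" using i gt x0i by (simp add: x0_def)
    have K: "gap_kernel eps c x = gap_kernel eps c x0"
      using kernel_insert[OF li, of eps c] xx tk x0i gt by simp
    have dec: "x = take i x @ x!i # drop (Suc i) x" using i by (simp add: id_take_nth_drop)
    have dec0: "x0 = take i x @ (x!i - 1) # drop (Suc i) x" using i by (simp add: x0_def upd_conv_take_nth_drop)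
    have T0: "tr 0 (a @ (xi - 1) # b) = tr 0 (a @ xi # b)" if "Suc (mfinal 0 a) < xi" for a b xi
      using that by (simp add: tr_append min_def; arith)
    have T: "tr 0 x0 = tr 0 x"
    proof -
      have "tr 0 x0 = tr 0 (take i x @ x!i # drop (Suc i) x)" unfolding dec0 by (rule T0[OF gt])
      also have "\<dots> = tr 0 x" by (simp only: dec[symmetric])
      finally show ?thesis .
    qed
    have S0: "sum_list (a @ (xi - 1) # b) < sum_list (a @ xi # b)" if "Suc (mfinal 0 a) < xi" for a b xi
      using that by simp
    have "sum_list x0 < sum_list x"
    proof -
      have "sum_list x0 < sum_list (take i x @ x!i # drop (Suc i) x)" unfolding dec0 by (rule S0[OF gt])
      also have "\<dots> = sum_list x" by (simp only: dec[symmetric])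
      finally show ?thesis .
    qed
    then have "gap_kernel eps c x0 = gap_kernel eps c (tr 0 x0)" by (rule less)
    with K T show ?thesis by simp
  qed
qed

lemma enat_lt_mono: "enat a < c \<Longrightarrow> b \<le> a \<Longrightarrow> enat b < c"
  by (meson enat_ord_simps(1) le_less_trans)

lemma run2_segs_pick:
  assumes "tr m xs = xs" "enat (m + length xs) < c" "0 < eps" "eps < 1"
  shows "\<exists>ov. (ov, Suc (mfinal m xs)) \<in> set_pmf (run2 eps c (Suc m) (concat (map seg xs)))"
  using assms(1,2)
proof (induction xs arbitrary: m)
  case Nil
  then show ?case by auto
next
  case (Cons y ys)
  have y: "y \<le> Suc m" and ys: "tr (Suc m - y) ys = ys"
    using Cons.prems(1) by (auto simp: min_def split: if_splits)
  have c1: "enat (Suc m - y) < c"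
    using Cons.prems(2) by (rule enat_lt_mono) simp
  have c2: "enat (Suc m - y + length ys) < c"
    using Cons.prems(2) by (rule enat_lt_mono) simp
  obtain o2 where o2: "(o2, Suc (mfinal (Suc (Suc m - y) - 1) ys)) \<in> set_pmf (run2 eps c (Suc (Suc m - y) - 1 + 1) (concat (map seg ys)))"
    using Cons.IH[OF ys c2] by auto
  have f: "(replicate y True, Suc m - y) \<in> set_pmf (run2 eps c (Suc m) (replicate y False))"
    using y by (rule run2_fill)
  have p: "([False], Suc (Suc m - y)) \<in> set_pmf (run2 eps c (Suc m - y) [True])"
    using run2_pick[OF assms(3,4) c1] .
  have "(replicate y True @ [False] @ o2, Suc (mfinal (Suc m - y) ys))
      \<in> set_pmf (run2 eps c (Suc m) (replicate y False @ [True] @ concat (map seg ys)))"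
    by (rule run2_app[OF f run2_app[OF p]]) (use o2 in simp)
  moreover have "concat (map seg (y # ys)) = replicate y False @ [True] @ concat (map seg ys)"
    by (simp add: seg_def)
  ultimately show ?case by auto
qed

definition cntF :: "bool list \<Rightarrow> nat" where "cntF w = length (filter Not w)"

lemma run2_drop:
  assumes "L \<le> cntF v" "0 < eps" "eps < 1"
  shows "\<exists>ov h. (ov, h) \<in> set_pmf (run2 eps c L v) \<and> take L ov = replicate L True"
  using assms(1)
proof (induction v arbitrary: L)
  case Nil
  then show ?case by (auto simp: cntF_def)
next
  case (Cons b v)
  show ?case
  proof (cases "L = 0")
    case True
    obtain p where "p \<in> set_pmf (run2 eps c L (b # v))" using set_pmf_not_empty by fast
    then show ?thesis using True by (cases p) auto
  next
    case False
    show ?thesis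
    proof (cases b)
      case True
      with Cons.prems have "L \<le> cntF v" by (simp add: cntF_def)
      then obtain ov h where oh: "(ov, h) \<in> set_pmf (run2 eps c L v)" "take L ov = replicate L True"
        using Cons.IH by blast
      have "([True] @ ov, h) \<in> set_pmf (run2 eps c L ([True] @ v))"
        by (rule run2_app[OF run2_keep[OF assms(2,3)] oh(1)])
      moreover have "take L (True # ov) = replicate L True"
      proof -
        obtain L' where L': "L = Suc L'" using False by (cases L) auto
        have h: "take (Suc L') ov = replicate (Suc L') True" using oh(2) L' by simp
        from h have "take L' (take (Suc L') ov) = take L' (replicate (Suc L') True)" by (rule arg_cong)
        then have "take L' ov = replicate L' True" by (simp del: replicate_Suc)
        then show ?thesis using L' by simp
      qed
      ultimately have "(True # ov, h) \<in> set_pmf (run2 eps c L (b # v)) \<and> take L (True # ov) = replicate L True"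
        using True by (simp only: append_Cons append_Nil)
      then show ?thesis by blast
    next
      case b: False
      with Cons.prems have "L - 1 \<le> cntF v" by (simp add: cntF_def)
      then obtain ov h where oh: "(ov, h) \<in> set_pmf (run2 eps c (L - 1) v)" "take (L - 1) ov = replicate (L - 1) True"
        using Cons.IH by blast
      have "(True # ov, h) \<in> set_pmf (run2 eps c L (False # v))"
        using oh(1) False by (auto intro: image_eqI[of _ _ "(ov, h)"])
      moreover have "take L (True # ov) = replicate L True"
        using oh(2) False by (cases L) auto
      ultimately have "(True # ov, h) \<in> set_pmf (run2 eps c L (b # v)) \<and> take L (True # ov) = replicate L True"
        using b by simp
      then show ?thesis by blast
    qed
  qed
qed

lemma cntF_Cons[simp]: "cntF (b # w) = (if b then cntF w else Suc (cntF w))"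
  by (simp add: cntF_def)

lemma cntF_rep: "cntF (replicate n False) = n"
  by (induction n) (auto simp: cntF_def)

lemma cntF_append: "cntF (a @ b) = cntF a + cntF b"
  by (simp add: cntF_def)

lemma bp_run:
  assumes "t < n"
  shows "ball_positions (a @ replicate n True @ b) ! (cnt a + t) = length a + t"
  using assms by (simp add: bp_append bp_rep bp_len nth_append)

lemma witness:
  assumes s: "tr 0 s = s" and j: "j < length s" and sj: "1 \<le> s ! j"
    and c: "enat (length s + 1) \<le> c" and e: "0 < eps" "eps < 1"
  shows "\<exists>w \<in> set_pmf (sbbs_run eps c 0 (config_of_gaps s)). j < cnt w - 1 \<and> gaps_of w ! j = 0"
proof -
  define M where "M = mfinal 0 (take j s)"
  define L where "L = Suc M - s ! j"
  define v where "v = concat (map seg (drop (Suc j) s)) @ replicate (length s + 1) False"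
  define u where "u = [True] @ concat (map seg (take j s)) @ replicate (s!j) False @ [True]"
  have cfg: "config_of_gaps s = u @ v"
    using config_split(1)[OF j] by (simp add: u_def v_def)
  have Mle: "M \<le> j" using mfinal_le[of 0 "take j s"] j by (simp add: M_def)
  have sjle: "s ! j \<le> Suc M" using tr_le[OF s j] by (simp add: M_def)
  have c0: "enat 0 < c"
  proof -
    have "enat 0 < enat (length s + 1)" by simp
    then show ?thesis using c by (rule less_le_trans)
  qed
  have p1: "([False], Suc 0) \<in> set_pmf (run2 eps c 0 [True])" by (rule run2_pick[OF e c0])
  have trj: "tr 0 (take j s) = take j s" using s take_tr by metis
  have cj: "enat (0 + length (take j s)) < c"
  proof -
    have "enat (0 + length (take j s)) < enat (length s + 1)" using j by simp
    then show ?thesis using c by (rule less_le_trans)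
  qed
  obtain o1 where p2: "(o1, Suc M) \<in> set_pmf (run2 eps c (Suc 0) (concat (map seg (take j s))))"
    using run2_segs_pick[OF trj cj e] unfolding M_def by auto
  have p3: "(replicate (s!j) True, L) \<in> set_pmf (run2 eps c (Suc M) (replicate (s!j) False))"
    unfolding L_def by (rule run2_fill[OF sjle])
  have p4: "([True], L) \<in> set_pmf (run2 eps c L [True])" by (rule run2_keep[OF e])
  have Lle: "L \<le> cntF v"
    using Mle j by (simp add: L_def v_def cntF_append cntF_rep)
  obtain o2 h2 where p5: "(o2, h2) \<in> set_pmf (run2 eps c L v)" and o2t: "take L o2 = replicate L True"
    using run2_drop[OF Lle e] by blast
  define a where "a = [False] @ o1"
  define P where "P = a @ replicate (Suc (s!j)) True"
  have pP: "(P, L) \<in> set_pmf (run2 eps c 0 u)"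
  proof -
    have "([False] @ o1 @ replicate (s!j) True @ [True], L) \<in> set_pmf (run2 eps c 0 u)"
      unfolding u_def by (rule run2_app[OF p1 run2_app[OF p2 run2_app[OF p3 p4]]])
    moreover have "[False] @ o1 @ replicate (s!j) True @ [True] = P"
      by (simp add: P_def a_def replicate_append_same)
    ultimately show ?thesis by simp
  qed
  have pW: "(P @ o2, h2) \<in> set_pmf (run2 eps c 0 (u @ v))" by (rule run2_app[OF pP p5])
  have cu: "cnt u = Suc (Suc j)" using j by (simp add: u_def cnt_segs cnt_rep)
  have cP: "cnt P + L = Suc (Suc j)" using run2_inv[OF pP] cu by simp
  have ca: "cnt a + Suc (s!j) + L = Suc (Suc j)" using cP by (simp add: P_def cnt_rep)
  define n where "n = Suc (s!j) + L"
  have o2d: "o2 = replicate L True @ drop L o2" using o2t by (metis append_take_drop_id)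
  have W: "P @ o2 = a @ replicate n True @ drop L o2"
    unfolding P_def n_def by (subst o2d) (simp add: replicate_add)
  have i1: "j = cnt a + (s!j + L - 1)" using ca sj by simp
  have i2: "Suc j = cnt a + (s!j + L)" using ca sj by simp
  have b1: "ball_positions (P @ o2) ! j = length a + (s!j + L - 1)"
    unfolding W by (subst i1, rule bp_run) (use sj in \<open>simp add: n_def\<close>)
  have b2: "ball_positions (P @ o2) ! Suc j = length a + (s!j + L)"
    unfolding W by (subst i2, rule bp_run) (simp add: n_def)
  have cW: "j < cnt (P @ o2) - 1" unfolding W using ca by (simp add: cnt_rep n_def)
  have g: "gaps_of (P @ o2) ! j = 0"
    using gaps_nth[OF cW] b1 b2 sj by simp
  have mem: "P @ o2 \<in> set_pmf (sbbs_run eps c 0 (config_of_gaps s))"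
    unfolding run_fst cfg using pW by (auto intro: image_eqI[of _ fst "(P @ o2, h2)"])
  show ?thesis using mem cW g by blast
qed

lemma kernel_distinct_tr:
  assumes s: "tr 0 s = s" and t: "tr 0 t = t" and len: "length t = length s"
    and j: "j < length s" and lt: "t ! j < s ! j"
    and c: "enat (length s + 1) \<le> c" and e: "0 < eps" "eps < 1"
  shows "gap_kernel eps c t \<noteq> gap_kernel eps c s"
proof
  assume eq: "gap_kernel eps c t = gap_kernel eps c s"
  obtain w where w: "w \<in> set_pmf (sbbs_run eps c 0 (config_of_gaps s))"
      and wj: "j < cnt w - 1" and g: "gaps_of w ! j = 0"
    using witness[OF s j _ c e] lt by auto
  have "fk s w \<in> set_pmf (gap_kernel eps c s)" using w by (simp add: gap_kernel_fk)
  then have "fk s w \<in> set_pmf (gap_kernel eps c t)" using eq by simp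
  then obtain w' where w': "fk s w = fk t w'" by (auto simp: gap_kernel_fk)
  have jl: "j < length (fk s w)" using wj j by (simp add: fk_def gaps_len)
  have v1: "fk s w ! j = - int (s ! j)" using jl g by (simp add: fk_def)
  have jl': "j < length (fk t w')" using jl w' by simp
  have v2: "fk t w' ! j = int (gaps_of w' ! j) - int (t ! j)" using jl' by (simp add: fk_def)
  show False using v1 v2 w' lt by simp
qed

lemma kernel_distinct:
  assumes len: "length x = length y" and ne: "tr 0 x \<noteq> tr 0 y"
    and c: "enat (length x + 1) \<le> c" and e: "0 < eps" "eps < 1"
  shows "gap_kernel eps c x \<noteq> gap_kernel eps c y"
proof -
  let ?t = "tr 0 x" and ?s = "tr 0 y"
  have lts: "length ?t = length ?s" using len by simp
  obtain j where j: "j < length ?s" and neq: "?t ! j \<noteq> ?s ! j"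
    using ne lts nth_equalityI by metis
  have c': "enat (length ?s + 1) \<le> c" "enat (length ?t + 1) \<le> c" using c len by simp_all
  have "gap_kernel eps c ?t \<noteq> gap_kernel eps c ?s"
  proof (cases "?t ! j < ?s ! j")
    case True
    then show ?thesis using kernel_distinct_tr[OF tr_idem tr_idem lts j True c'(1) e] by simp
  next
    case False
    then have "?s ! j < ?t ! j" using neq by simp
    then show ?thesis using kernel_distinct_tr[OF tr_idem tr_idem lts[symmetric] _ _ c'(2) e] j lts by metis
  qed
  then show ?thesis using kernel_tr[of eps c x] kernel_tr[of eps c y] by simp
qed

definition fib :: "nat \<Rightarrow> nat list \<Rightarrow> nat list set" where
  "fib d t = {y \<in> bdry d. tr 0 y = t}"

lemma bdry_len: "y \<in> bdry d \<Longrightarrow> length y = d - 1"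
  by (simp add: bdry_def)

lemma KE:
  assumes "0 < eps" "eps < 1" "x \<in> bdry d" "y \<in> bdry d"
  shows "gap_kernel eps \<infinity> x = gap_kernel eps \<infinity> y \<longleftrightarrow> tr 0 x = tr 0 y"
proof
  assume "gap_kernel eps \<infinity> x = gap_kernel eps \<infinity> y"
  then show "tr 0 x = tr 0 y"
    using kernel_distinct[of x y "\<infinity>" eps] assms bdry_len by fastforce
next
  assume "tr 0 x = tr 0 y"
  then show "gap_kernel eps \<infinity> x = gap_kernel eps \<infinity> y"
    using kernel_tr[of eps "\<infinity>" x] kernel_tr[of eps "\<infinity>" y] by simp
qed

lemma cells_eq:
  assumes "0 < eps" "eps < 1"
  shows "cells d eps = (\<lambda>x. fib d (tr 0 x)) ` bdry d"
proof -
  have "kernel_equiv d eps `` {x} = fib d (tr 0 x)" if x: "x \<in> bdry d" for x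
  proof (rule set_eqI)
    fix y
    show "y \<in> kernel_equiv d eps `` {x} \<longleftrightarrow> y \<in> fib d (tr 0 x)"
    proof (cases "y \<in> bdry d")
      case True
      then show ?thesis using KE[OF assms x True] x by (auto simp: kernel_equiv_def fib_def)
    next
      case False
      then show ?thesis by (auto simp: kernel_equiv_def fib_def)
    qed
  qed
  then show ?thesis
    unfolding cells_def quotient_def by auto
qed

lemma shift_all: "(\<forall>i\<in>{1..n}. Q (i - 1)) \<longleftrightarrow> (\<forall>i<n. Q (i::nat))"
proof
  assume a: "\<forall>i\<in>{1..n}. Q (i - 1)"
  show "\<forall>i<n. Q i"
  proof (intro allI impI)
    fix i assume "i < n"
    then have "Suc i \<in> {1..n}" by simp
    then show "Q i" using a by fastforce
  qed
qed auto

lemma part_i: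
  assumes z: "z \<in> bdry d"
  shows "\<exists>x I. x \<in> bdry d \<and> I \<subseteq> {1..d-1} \<and> I \<noteq> {}
         \<and> (\<forall>i. 1 \<le> i \<and> i < Min I \<longrightarrow> coord x i = 1) \<and> coord x (Min I) = 0
         \<and> fib d (tr 0 z) = {y \<in> bdry d. (\<forall>i\<in>I. coord y i = coord x i)
                            \<and> (\<forall>i\<in>{1..d-1} - I. coord x i \<le> coord y i)}"
proof -
  define x where "x = tr 0 z"
  define mf where "mf i = mfinal 0 (take i x)" for i
  define I where "I = {i \<in> {1..d-1}. x!(i-1) < Suc (mf (i-1))}"
  have lz: "length z = d - 1" using z by (simp add: bdry_def)
  have lx: "length x = d - 1" using lz by (simp add: x_def)
  have xt: "tr 0 x = x" by (simp add: x_def tr_idem)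
  obtain i0 where i0: "i0 \<in> {1..d-1}" "coord z i0 = 0" using z by (auto simp: bdry_def)
  have il0: "i0 - 1 < length z" using i0 lz by auto
  have x0: "x ! (i0 - 1) = 0"
    using i0 nth_tr[OF il0, of 0] by (simp add: x_def coord_def)
  have xb: "x \<in> bdry d" using lx x0 i0 by (auto simp: bdry_def coord_def)
  have i0I: "i0 \<in> I" using i0 x0 by (simp add: I_def)
  have Isub: "I \<subseteq> {1..d-1}" by (auto simp: I_def)
  have fI: "finite I" using Isub finite_subset by blast
  have IMin: "Min I \<in> I" using fI i0I Min_in by blast
  have Minle: "\<And>i. i \<in> I \<Longrightarrow> Min I \<le> i" using fI by simp
  have xle: "\<And>k. k < d - 1 \<Longrightarrow> x ! k \<le> Suc (mf k)"
    using tr_le[OF xt] lx by (simp add: mf_def)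
  have mfz: "\<And>i. 1 \<le> i \<Longrightarrow> i \<le> Min I \<Longrightarrow> mf (i - 1) = 0 \<and> (i < Min I \<longrightarrow> x ! (i - 1) = 1)"
  proof -
    fix i show "1 \<le> i \<Longrightarrow> i \<le> Min I \<Longrightarrow> mf (i - 1) = 0 \<and> (i < Min I \<longrightarrow> x ! (i - 1) = 1)"
    proof (induction i)
      case 0 then show ?case by simp
    next
      case (Suc i)
      have mfi: "mf i = 0"
      proof (cases "i = 0")
        case True then show ?thesis by (simp add: mf_def)
      next
        case False
        then have ih: "mf (i - 1) = 0" and xi: "x ! (i - 1) = 1" using Suc by auto
        have il: "i - 1 < length x" using Suc.prems IMin Isub lx False by auto
        have "take i x = take (i - 1) x @ [x ! (i - 1)]"
          using il False by (metis Suc_pred' not_gr_zero take_Suc_conv_app_nth)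
        then show ?thesis using ih xi by (simp add: mf_def mfinal_append)
      qed
      moreover have "Suc i < Min I \<longrightarrow> x ! i = 1"
      proof
        assume lt: "Suc i < Min I"
        have iin: "Suc i \<in> {1..d-1}" using lt IMin Isub by auto
        have "Suc i \<notin> I" using lt Minle by fastforce
        then have "\<not> x ! i < Suc (mf i)" using iin by (simp add: I_def)
        moreover have "x ! i \<le> Suc (mf i)" using xle iin by simp
        ultimately show "x ! i = 1" using mfi by simp
      qed
      ultimately show ?case by simp
    qed
  qed
  have c1: "\<forall>i. 1 \<le> i \<and> i < Min I \<longrightarrow> coord x i = 1"
    using mfz by (simp add: coord_def)
  have c2: "coord x (Min I) = 0"
  proof -
    have "1 \<le> Min I" using IMin Isub by auto
    then have "mf (Min I - 1) = 0" using mfz by simp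
    then show ?thesis using IMin by (simp add: I_def coord_def)
  qed
  have fibeq: "fib d (tr 0 z) = {y \<in> bdry d. (\<forall>i\<in>I. coord y i = coord x i)
                            \<and> (\<forall>i\<in>{1..d-1} - I. coord x i \<le> coord y i)}"
  proof (rule set_eqI)
    fix y
    show "y \<in> fib d (tr 0 z) \<longleftrightarrow> y \<in> {y \<in> bdry d. (\<forall>i\<in>I. coord y i = coord x i)
                            \<and> (\<forall>i\<in>{1..d-1} - I. coord x i \<le> coord y i)}"
    proof (cases "y \<in> bdry d")
      case False then show ?thesis by (simp add: fib_def)
    next
      case True
      have ly: "length y = length x" using True lx by (simp add: bdry_def)
      let ?Q = "\<lambda>k. (x!k < Suc (mf k) \<longrightarrow> y!k = x!k) \<and> (Suc (mf k) \<le> x!k \<longrightarrow> x!k \<le> y!k)"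
      have "tr 0 y = x \<longleftrightarrow> (\<forall>k<d-1. ?Q k)"
        using tr_char[OF xt ly] lx by (simp add: mf_def)
      also have "\<dots> \<longleftrightarrow> (\<forall>i\<in>{1..d-1}. ?Q (i - 1))" using shift_all[where Q = "?Q" and n = "d-1"] by simp
      also have "\<dots> \<longleftrightarrow> (\<forall>i\<in>I. coord y i = coord x i) \<and> (\<forall>i\<in>{1..d-1} - I. coord x i \<le> coord y i)"
        by (auto simp: I_def coord_def not_less)
      finally show ?thesis using True by (simp add: fib_def x_def)
    qed
  qed
  show ?thesis
    using xb Isub i0I c1 c2 fibeq by blast
qed

lemma part_ii:
  assumes d: "d \<ge> 2" and j: "j \<in> {1..d-1}"
  shows "\<exists>t \<in> bdry d. {y \<in> bdry d. coord y j = 0 \<and> (j + 1 \<le> d - 1 \<longrightarrow> 2 \<le> coord y (j + 1))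
                     \<and> (\<forall>i\<in>{1..d-1} - {j, j + 1}. 1 \<le> coord y i)} = fib d (tr 0 t)"
proof -
  define ft where "ft i = (if Suc i < j then 1 else if Suc i = j then 0 else if i = j then 2 else (1::nat))" for i
  define t where "t = map ft [0..<d-1]"
  have lt: "length t = d - 1" by (simp add: t_def)
  have tn: "\<And>i. i < d - 1 \<Longrightarrow> t ! i = ft i" by (simp add: t_def)
  have g: "\<And>i. i \<le> d - 1 \<Longrightarrow> mfinal 0 (take i t) = (if i = j then 1 else 0)"
  proof -
    fix i show "i \<le> d - 1 \<Longrightarrow> mfinal 0 (take i t) = (if i = j then 1 else 0)"
    proof (induction i)
      case 0 then show ?case using j by simp
    next
      case (Suc i)
      have il: "i < length t" using Suc.prems lt by simp
      have "take (Suc i) t = take i t @ [t ! i]" using il by (simp add: take_Suc_conv_app_nth)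
      then have "mfinal 0 (take (Suc i) t) = Suc (mfinal 0 (take i t)) - ft i"
        using tn il lt by (simp add: mfinal_append)
      then show ?case using Suc j by (auto simp: ft_def)
    qed
  qed
  have tt: "tr 0 t = t"
  proof (rule nth_equalityI)
    show "length (tr 0 t) = length t" by simp
  next
    fix i assume "i < length (tr 0 t)"
    then have i: "i < d - 1" using lt by simp
    show "tr 0 t ! i = t ! i"
      using i lt by (simp add: nth_tr g tn ft_def min_def)
  qed
  have tb: "t \<in> bdry d" using lt j tn by (auto simp: bdry_def coord_def ft_def intro!: bexI[of _ j])
  have "{y \<in> bdry d. coord y j = 0 \<and> (j + 1 \<le> d - 1 \<longrightarrow> 2 \<le> coord y (j + 1))
                     \<and> (\<forall>i\<in>{1..d-1} - {j, j + 1}. 1 \<le> coord y i)} = fib d t"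
  proof (rule set_eqI)
    fix y
    show "y \<in> {y \<in> bdry d. coord y j = 0 \<and> (j + 1 \<le> d - 1 \<longrightarrow> 2 \<le> coord y (j + 1))
                     \<and> (\<forall>i\<in>{1..d-1} - {j, j + 1}. 1 \<le> coord y i)} \<longleftrightarrow> y \<in> fib d t"
    proof (cases "y \<in> bdry d")
      case False then show ?thesis by (simp add: fib_def)
    next
      case True
      have ly: "length y = length t" using True lt by (simp add: bdry_def)
      let ?Q = "\<lambda>k. (t!k < Suc (mfinal 0 (take k t)) \<longrightarrow> y!k = t!k) \<and> (Suc (mfinal 0 (take k t)) \<le> t!k \<longrightarrow> t!k \<le> y!k)"
      let ?R = "\<lambda>k. (Suc k = j \<longrightarrow> y!k = 0) \<and> (Suc k \<noteq> j \<longrightarrow> ft k \<le> y!k)"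
      have QR: "?Q k \<longleftrightarrow> ?R k" if "k < d - 1" for k
        using that tn[OF that] g[of k] by (auto simp: ft_def)
      have "tr 0 y = t \<longleftrightarrow> (\<forall>k<d-1. ?Q k)"
        using tr_char[OF tt ly] lt by simp
      also have "\<dots> \<longleftrightarrow> (\<forall>k<d-1. ?R k)" using QR by auto
      also have "\<dots> \<longleftrightarrow> (\<forall>i\<in>{1..d-1}. ?R (i - 1))" using shift_all[where Q = "?R" and n = "d-1"] by simp
      also have "\<dots> \<longleftrightarrow> coord y j = 0 \<and> (j + 1 \<le> d - 1 \<longrightarrow> 2 \<le> coord y (j + 1))
                     \<and> (\<forall>i\<in>{1..d-1} - {j, j + 1}. 1 \<le> coord y i)"
      proof
        assume a: "\<forall>i\<in>{1..d-1}. ?R (i - 1)"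
        have "coord y j = 0" using a j by (auto simp: coord_def)
        moreover have "j + 1 \<le> d - 1 \<longrightarrow> 2 \<le> coord y (j + 1)"
        proof
          assume jl: "j + 1 \<le> d - 1"
          then have "j + 1 \<in> {1..d-1}" by simp
          then have "?R (j + 1 - 1)" using a by blast
          moreover have "ft j = 2" by (simp add: ft_def)
          ultimately show "2 \<le> coord y (j + 1)" by (simp add: coord_def)
        qed
        moreover have "\<forall>i\<in>{1..d-1} - {j, j + 1}. 1 \<le> coord y i"
        proof
          fix i assume i: "i \<in> {1..d-1} - {j, j + 1}"
          then have "?R (i - 1)" using a by auto
          moreover have "Suc (i - 1) \<noteq> j" using i by auto
          moreover have "ft (i - 1) = 1" using i by (auto simp: ft_def)
          ultimately show "1 \<le> coord y i" by (simp add: coord_def)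
        qed
        ultimately show "coord y j = 0 \<and> (j + 1 \<le> d - 1 \<longrightarrow> 2 \<le> coord y (j + 1))
                     \<and> (\<forall>i\<in>{1..d-1} - {j, j + 1}. 1 \<le> coord y i)" by blast
      next
        assume a: "coord y j = 0 \<and> (j + 1 \<le> d - 1 \<longrightarrow> 2 \<le> coord y (j + 1))
                     \<and> (\<forall>i\<in>{1..d-1} - {j, j + 1}. 1 \<le> coord y i)"
        show "\<forall>i\<in>{1..d-1}. ?R (i - 1)"
        proof
          fix i assume i: "i \<in> {1..d-1}"
          consider "i = j" | "i = j + 1" | "i \<noteq> j \<and> i \<noteq> j + 1" by blast
          then show "?R (i - 1)"
          proof cases
            case 1 then show ?thesis using a i by (auto simp: coord_def)
          next
            case 2 then show ?thesis using a i j by (auto simp: coord_def ft_def)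
          next
            case 3
            then have "1 \<le> coord y i" using a i by auto
            moreover have "ft (i - 1) = 1" using 3 i by (auto simp: ft_def)
            ultimately show ?thesis using 3 i by (auto simp: coord_def)
          qed
        qed
      qed
      finally show ?thesis using True by (simp add: fib_def)
    qed
  qed
  then show ?thesis using tb tt by metis
qed

theorem lemma6p2:
  fixes d :: nat and eps0 :: real
  assumes "d \<ge> 2" and "0 < eps0" and "eps0 < 1"
  shows
   "finite (cells d eps0)
    \<and> (\<forall>eps1. 0 < eps1 \<and> eps1 < 1 \<longrightarrow> cells d eps1 = cells d eps0)
    \<and> (\<forall>eps c. 0 < eps \<and> eps < 1 \<and> 1 \<le> c \<longrightarrow>
         (\<forall>p\<in>cells d eps0. \<forall>x\<in>p. \<forall>y\<in>p. gap_kernel eps c x = gap_kernel eps c y))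
    \<and> (\<forall>p\<in>cells d eps0. \<exists>x I. x \<in> bdry d \<and> I \<subseteq> {1..d-1} \<and> I \<noteq> {}
         \<and> (\<forall>i. 1 \<le> i \<and> i < Min I \<longrightarrow> coord x i = 1) \<and> coord x (Min I) = 0
         \<and> p = {y \<in> bdry d. (\<forall>i\<in>I. coord y i = coord x i)
                            \<and> (\<forall>i\<in>{1..d-1} - I. coord x i \<le> coord y i)})
    \<and> (\<forall>j\<in>{1..d-1}.
         {y \<in> bdry d. coord y j = 0 \<and> (j + 1 \<le> d - 1 \<longrightarrow> 2 \<le> coord y (j + 1))
                     \<and> (\<forall>i\<in>{1..d-1} - {j, j + 1}. 1 \<le> coord y i)} \<in> cells d eps0)
    \<and> (enat d \<le> c \<longrightarrow>
         (\<forall>eps. 0 < eps \<and> eps < 1 \<longrightarrow>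
            (\<forall>p\<in>cells d eps0. \<forall>q\<in>cells d eps0. p \<noteq> q \<longrightarrow>
               (\<forall>x\<in>p. \<forall>y\<in>q. gap_kernel eps c x \<noteq> gap_kernel eps c y))))"
proof -
  have CE: "cells d eps0 = (\<lambda>x. fib d (tr 0 x)) ` bdry d" using cells_eq assms(2,3) by blast
  have mem: "\<And>p x. p \<in> cells d eps0 \<Longrightarrow> x \<in> p \<Longrightarrow> x \<in> bdry d \<and> p = fib d (tr 0 x)"
    unfolding CE fib_def by auto
  have P1: "finite (cells d eps0)"
  proof -
    have "tr 0 ` bdry d \<subseteq> {xs. set xs \<subseteq> {0..d} \<and> length xs = d - 1}"
    proof
      fix t assume "t \<in> tr 0 ` bdry d"
      then obtain z where z: "z \<in> bdry d" "t = tr 0 z" by blast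
      have "set t \<subseteq> {0..0 + length z}" using tr_bound z(2) by metis
      moreover have "length z = d - 1" "length t = d - 1" using z bdry_len by auto
      ultimately show "t \<in> {xs. set xs \<subseteq> {0..d} \<and> length xs = d - 1}" by auto
    qed
    then have "finite (tr 0 ` bdry d)"
      using finite_lists_length_eq[of "{0..d}" "d - 1"] finite_subset by blast
    then have "finite (fib d ` (tr 0 ` bdry d))" by blast
    moreover have "cells d eps0 = fib d ` (tr 0 ` bdry d)" unfolding CE by auto
    ultimately show ?thesis by simp
  qed
  have P2: "\<forall>eps1. 0 < eps1 \<and> eps1 < 1 \<longrightarrow> cells d eps1 = cells d eps0"
    using cells_eq CE by auto
  have P3: "\<forall>eps c. 0 < eps \<and> eps < 1 \<and> 1 \<le> c \<longrightarrow>
         (\<forall>p\<in>cells d eps0. \<forall>x\<in>p. \<forall>y\<in>p. gap_kernel eps c x = gap_kernel eps c y)"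
  proof (intro allI impI ballI)
    fix eps c p x y assume "p \<in> cells d eps0" "x \<in> p" "y \<in> p"
    then have "tr 0 x = tr 0 y" using mem by (auto simp: fib_def)
    then show "gap_kernel eps c x = gap_kernel eps c y"
      using kernel_tr[of eps c x] kernel_tr[of eps c y] by simp
  qed
  have P4: "\<forall>p\<in>cells d eps0. \<exists>x I. x \<in> bdry d \<and> I \<subseteq> {1..d-1} \<and> I \<noteq> {}
         \<and> (\<forall>i. 1 \<le> i \<and> i < Min I \<longrightarrow> coord x i = 1) \<and> coord x (Min I) = 0
         \<and> p = {y \<in> bdry d. (\<forall>i\<in>I. coord y i = coord x i)
                            \<and> (\<forall>i\<in>{1..d-1} - I. coord x i \<le> coord y i)}"
    unfolding CE using part_i by blast
  have P5: "\<forall>j\<in>{1..d-1}.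
         {y \<in> bdry d. coord y j = 0 \<and> (j + 1 \<le> d - 1 \<longrightarrow> 2 \<le> coord y (j + 1))
                     \<and> (\<forall>i\<in>{1..d-1} - {j, j + 1}. 1 \<le> coord y i)} \<in> cells d eps0"
  proof
    fix j assume j: "j \<in> {1..d-1}"
    obtain t where "t \<in> bdry d" and "{y \<in> bdry d. coord y j = 0 \<and> (j + 1 \<le> d - 1 \<longrightarrow> 2 \<le> coord y (j + 1))
                     \<and> (\<forall>i\<in>{1..d-1} - {j, j + 1}. 1 \<le> coord y i)} = fib d (tr 0 t)"
      using part_ii[OF assms(1) j] by blast
    then show "{y \<in> bdry d. coord y j = 0 \<and> (j + 1 \<le> d - 1 \<longrightarrow> 2 \<le> coord y (j + 1))
                     \<and> (\<forall>i\<in>{1..d-1} - {j, j + 1}. 1 \<le> coord y i)} \<in> cells d eps0"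
      unfolding CE by blast
  qed
  have P6: "enat d \<le> c \<longrightarrow>
         (\<forall>eps. 0 < eps \<and> eps < 1 \<longrightarrow>
            (\<forall>p\<in>cells d eps0. \<forall>q\<in>cells d eps0. p \<noteq> q \<longrightarrow>
               (\<forall>x\<in>p. \<forall>y\<in>q. gap_kernel eps c x \<noteq> gap_kernel eps c y)))"
  proof (intro impI allI ballI)
    fix eps :: real and p q x y
    assume c: "enat d \<le> c" and e: "0 < eps \<and> eps < 1" and p: "p \<in> cells d eps0" and q: "q \<in> cells d eps0"
      and pq: "p \<noteq> q" and x: "x \<in> p" and y: "y \<in> q"
    have xb: "x \<in> bdry d" and pe: "p = fib d (tr 0 x)" using mem[OF p x] by auto
    have yb: "y \<in> bdry d" and qe: "q = fib d (tr 0 y)" using mem[OF q y] by auto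
    have ne: "tr 0 x \<noteq> tr 0 y" using pq pe qe by auto
    have lx: "length x = d - 1" and ly: "length y = d - 1" using xb yb bdry_len by auto
    have c': "enat (length x + 1) \<le> c" using c lx assms(1) by simp
    show "gap_kernel eps c x \<noteq> gap_kernel eps c y"
      using kernel_distinct[OF _ ne c'] lx ly e by simp
  qed
  show ?thesis using P1 P2 P3 P4 P5 P6 by blast
qed


end
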